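(* The unitary $U_4=(T_{AB}\otimes I_2)(I_2\otimes T_{BC})$ on $\mathbb{C}^2\otimes\mathbb{C}^2\otimes\mathbb{C}^2$ has $\mathrm{sr}(U_4)=4$.
   Context: $I_2$ is the $2\times 2$ identity, $\sigma_1=\begin{bmatrix}0&1\\1&0\end{bmatrix}$. $T=|0\rangle\langle0|\otimes I_2+|1\rangle\langle1|\otimes\sigma_1$ is the CNOT gate; $T_{AB}$ denotes $T$ with control qubit $A$ and target $B$, $T_{BC}$ with control $B$ and target $C$. For a matrix $U$ on $\mathbb{C}^2\otimes\mathbb{C}^2\otimes\mathbb{C}^2$ (systems $A,B,C$), its Schmidt rank $\mathrm{sr}(U)$ is the least integer $r$ such that $U=\sum_{j=1}^r A_j\otimes B_j\otimes C_j$ with $A_j,B_j,C_j$ complex $2\times 2$ matrices (i.e. the tensor rank of $U$). *)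

theory Defs
  imports Complex_Main
begin

text \<open>Qubit basis indices: False = |0>, True = |1>.
  A 2x2 matrix is a function bool => bool => complex (row, column);
  an operator on C^2 (x) C^2 (x) C^2 (systems A,B,C) is indexed by triples.\<close>

type_synonym qmat1 = "bool \<Rightarrow> bool \<Rightarrow> complex"
type_synonym qmat2 = "bool \<times> bool \<Rightarrow> bool \<times> bool \<Rightarrow> complex"
type_synonym qmat3 = "bool \<times> bool \<times> bool \<Rightarrow> bool \<times> bool \<times> bool \<Rightarrow> complex"

definition I2 :: qmat1 where "I2 i j = (if i = j then 1 else 0)"
definition sigma1 :: qmat1 where "sigma1 i j = (if i \<noteq> j then 1 else 0)"
definition proj0 :: qmat1 where "proj0 i j = (if i = False \<and> j = False then 1 else 0)"
definition proj1 :: qmat1 where "proj1 i j = (if i = True \<and> j = True then 1 else 0)"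

definition kron2 :: "qmat1 \<Rightarrow> qmat1 \<Rightarrow> qmat2" where
  "kron2 A B = (\<lambda>(a, b) (a', b'). A a a' * B b b')"

definition kron3 :: "qmat1 \<Rightarrow> qmat1 \<Rightarrow> qmat1 \<Rightarrow> qmat3" where
  "kron3 A B C = (\<lambda>(a, b, c) (a', b', c'). A a a' * B b b' * C c c')"

definition kron_2_1 :: "qmat2 \<Rightarrow> qmat1 \<Rightarrow> qmat3" where
  "kron_2_1 M C = (\<lambda>(a, b, c) (a', b', c'). M (a, b) (a', b') * C c c')"
definition kron_1_2 :: "qmat1 \<Rightarrow> qmat2 \<Rightarrow> qmat3" where
  "kron_1_2 A M = (\<lambda>(a, b, c) (a', b', c'). A a a' * M (b, c) (b', c'))"

definition matmul3 :: "qmat3 \<Rightarrow> qmat3 \<Rightarrow> qmat3" where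
  "matmul3 M N = (\<lambda>i j. \<Sum>k\<in>UNIV. M i k * N k j)"

definition CNOT :: qmat2 where
  "CNOT = (\<lambda>i j. kron2 proj0 I2 i j + kron2 proj1 sigma1 i j)"

definition U4 :: qmat3 where
  "U4 = matmul3 (kron_2_1 CNOT I2) (kron_1_2 I2 CNOT)"

definition schmidt_rank :: "qmat3 \<Rightarrow> nat" where
  "schmidt_rank U = (LEAST r. \<exists>A B C :: nat \<Rightarrow> qmat1.
      U = (\<lambda>i j. \<Sum>k<r. kron3 (A k) (B k) (C k) i j))"

end

theory Submission imports Defs "HOL-Analysis.Analysis" begin
lemma sum8: "(\<Sum>k\<in>(UNIV::(bool\<times>bool\<times>bool) set). f k) =
  f (False,False,False) + f (False,False,True) + f (False,True,False) + f (False,True,True) +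
  f (True,False,False) + f (True,False,True) + f (True,True,False) + f (True,True,True)"
proof -
  have U: "(UNIV::(bool\<times>bool\<times>bool) set) = {(False,False,False), (False,False,True), (False,True,False), (False,True,True),
  (True,False,False), (True,False,True), (True,True,False), (True,True,True)}" by (auto simp: UNIV_bool)
  show ?thesis by (subst U) (simp add: add_ac)
qed
lemma U4_eq: "U4 (a,b,c) (a',b',c') =
  (if a = a' then (if a then (if b \<noteq> b' then (if b then (if c = c' then 1 else 0) else (if c\<noteq>c' then 1 else 0)) else 0)
   else (if b = b' then (if b then (if c\<noteq>c' then 1 else 0) else (if c = c' then 1 else 0)) else 0)) else 0)"
  unfolding U4_def matmul3_def kron_2_1_def kron_1_2_def CNOT_def kron2_def I2_def sigma1_def proj0_def proj1_def sum8
  by (cases a; cases b; cases c; cases a'; cases b'; cases c'; simp)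

definition nk :: "4 \<Rightarrow> nat" where "nk k = (if k = 1 then 0 else if k = 2 then 1 else 2)"
definition ja :: "4 \<Rightarrow> bool" where "ja j = (j = 3 \<or> j = 4)"
definition jc :: "4 \<Rightarrow> bool" where "jc j = (j = 2 \<or> j = 4)"
definition eb :: "4 \<Rightarrow> bool" where "eb e = (e = 2 \<or> e = 3)"
definition eb' :: "4 \<Rightarrow> bool" where "eb' e = (e = 2 \<or> e = 4)"

lemma lower:
  fixes r :: nat
  assumes r: "r < 4" and U: "U4 = (\<lambda>i j. \<Sum>k<r. kron3 (A k) (B k) (C k) i j)"
  shows False
proof -
  define A' where "A' k = (if k < r then A k else (\<lambda>_ _. 0))" for k
  have U': "U4 x y = (\<Sum>k<3. kron3 (A' k) (B k) (C k) x y)" for x y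
  proof -
    have "U4 x y = (\<Sum>k<r. kron3 (A k) (B k) (C k) x y)" unfolding U by simp
    also have "\<dots> = (\<Sum>k<r. kron3 (A' k) (B k) (C k) x y)" by (rule sum.cong) (auto simp: A'_def)
    also have "\<dots> = (\<Sum>k<3. kron3 (A' k) (B k) (C k) x y)"
    proof (cases "r = 3")
      case False
      have "(\<Sum>k<3. kron3 (A' k) (B k) (C k) x y) = (\<Sum>k<r. kron3 (A' k) (B k) (C k) x y) + (\<Sum>k\<in>{r..<3}. kron3 (A' k) (B k) (C k) x y)"
        using False r sum.atLeastLessThan_concat[of 0 r 3 "\<lambda>k. kron3 (A' k) (B k) (C k) x y"] by (simp add: lessThan_atLeast0)
      also have "(\<Sum>k\<in>{r..<3}. kron3 (A' k) (B k) (C k) x y) = 0"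
        by (rule sum.neutral) (auto simp: A'_def kron3_def split: prod.splits)
      finally show ?thesis by simp
    qed simp
    finally show ?thesis .
  qed
  define \<alpha> :: "complex^4^4" where "\<alpha> = (\<chi> j k. if k = 4 then 0 else A' (nk k) (ja j) (ja j) * C (nk k) False (jc j))"
  define \<beta> :: "complex^4^4" where "\<beta> = (\<chi> k e. if k = 4 then 0 else B (nk k) (eb e) (eb' e))"
  have "\<alpha> ** \<beta> = mat 1"
  proof -
    have "(\<alpha> ** \<beta>) $ j $ e = U4 (ja j, eb e, False) (ja j, eb' e, jc j)" for j e
      by (simp add: U' matrix_matrix_mult_def \<alpha>_def \<beta>_def sum_4 nk_def numeral_3_eq_3 numeral_2_eq_2 kron3_def ac_simps)
    then show ?thesis
      by (simp add: vec_eq_iff forall_4 mat_def U4_eq ja_def jc_def eb_def eb'_def)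
  qed
  then have "det (\<alpha> ** \<beta>) = 1" by simp
  moreover have "det \<alpha> = 0"
    by (rule det_zero_column(1)[of 4]) (simp add: column_def \<alpha>_def vec_eq_iff)
  ultimately show False by (simp add: det_mul)
qed

lemma sum4n: "(\<Sum>k<4::nat. f k) = f 0 + f 1 + f 2 + (f 3 :: complex)"
  by (simp add: eval_nat_numeral add_ac)

definition Aw :: "nat \<Rightarrow> qmat1" where "Aw k = (if k < 2 then proj0 else proj1)"
definition Bw :: "nat \<Rightarrow> qmat1" where "Bw k = (if k = 0 then proj0 else if k = 1 then proj1 else if k = 2 then (\<lambda>x y. if x \<and> \<not> y then 1 else 0) else (\<lambda>x y. if \<not> x \<and> y then 1 else 0))"
definition Cw :: "nat \<Rightarrow> qmat1" where "Cw k = (if k = 0 \<or> k = 2 then I2 else sigma1)"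

lemma upper: "U4 = (\<lambda>i j. \<Sum>k<4. kron3 (Aw k) (Bw k) (Cw k) i j)"
proof (intro ext)
  fix i j :: "bool\<times>bool\<times>bool"
  obtain a b c where i: "i = (a,b,c)" by (cases i) auto
  obtain a' b' c' where j: "j = (a',b',c')" by (cases j) auto
  show "U4 i j = (\<Sum>k<4. kron3 (Aw k) (Bw k) (Cw k) i j)" unfolding i j U4_eq
    unfolding sum4n by (simp add: Aw_def Bw_def Cw_def kron3_def, cases a; cases b; cases c; cases a'; cases b'; cases c'; simp add: proj0_def proj1_def I2_def sigma1_def)
qed

theorem mainTheorem14:
  shows "schmidt_rank U4 = 4"
  unfolding schmidt_rank_def
proof (rule Least_equality)
  show "\<exists>A B C :: nat \<Rightarrow> qmat1. U4 = (\<lambda>i j. \<Sum>k<4. kron3 (A k) (B k) (C k) i j)"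
    by (intro exI) (rule upper)
next
  fix r assume "\<exists>A B C :: nat \<Rightarrow> qmat1. U4 = (\<lambda>i j. \<Sum>k<r. kron3 (A k) (B k) (C k) i j)"
  then obtain A B C :: "nat \<Rightarrow> qmat1" where "U4 = (\<lambda>i j. \<Sum>k<r. kron3 (A k) (B k) (C k) i j)" by blast
  then have "\<not> r < 4" using lower[of r A B C] by blast
  then show "4 \<le> r" by simp
qed

end
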